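(* Let $\Psi=(\psi_{ij})$ and $\Phi=(\phi_{ij})$ be orthogonal quantum Latin squares of order $6$ in standard form. If some entry $\psi_{ij}$ has weight $4$, then every entry $\phi_{kj}$, $k=1,\dots,6$, of the $j$-th column of $\Phi$ has weight $1$.
   Context: A quantum Latin square (QLS) of order $n$ is an $n\times n$ matrix $\Psi=(\psi_{ij})_{1\le i,j\le n}$ whose entries are unit vectors in $\mathbb C^n$ such that the entries of each row and the entries of each column form an orthonormal basis of $\mathbb C^n$. Two QLS $\Psi=(\psi_{ij})$ and $\Phi=(\phi_{ij})$ of order $n$ are orthogonal if $\{\psi_{ij}\otimes\phi_{ij}: 1\le i,j\le n\}$ is an orthonormal basis of $\mathbb C^n\otimes\mathbb C^n$. Fix the standard orthonormal basis $\ket{1},\dots,\ket{n}$ of $\mathbb C^n$. The support of a vector $v$ is $\{k:\braket{k}{v}\neq 0\}$ and its weight is the size of its support. A pair $\Psi,\Phi$ is in standard form if $\psi_{1j}=\phi_{1j}=\ket{j}$ for all $j=1,\dots,n$. *)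

theory Defs
  imports "HOL-Analysis.Analysis"
begin

text \<open>Vectors of C^n are modelled as functions nat => complex whose coordinates
  (w.r.t. the standard basis |1>,...,|n>) are indexed by 1..n and vanish outside.\<close>

definition cvec :: "nat \<Rightarrow> (nat \<Rightarrow> complex) \<Rightarrow> bool" where
  "cvec n v \<longleftrightarrow> (\<forall>k. k \<notin> {1..n} \<longrightarrow> v k = 0)"

definition cinner :: "nat \<Rightarrow> (nat \<Rightarrow> complex) \<Rightarrow> (nat \<Rightarrow> complex) \<Rightarrow> complex" where
  "cinner n u v = (\<Sum>k\<in>{1..n}. cnj (u k) * v k)"

definition onb :: "'i set \<Rightarrow> 'k set \<Rightarrow> ('i \<Rightarrow> 'k \<Rightarrow> complex) \<Rightarrow> bool" where
  "onb I D b \<longleftrightarrow>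
     (\<forall>i\<in>I. \<forall>k. k \<notin> D \<longrightarrow> b i k = 0) \<and>
     (\<forall>i\<in>I. \<forall>i'\<in>I. (\<Sum>k\<in>D. cnj (b i k) * b i' k) = (if i = i' then 1 else 0)) \<and>
     (\<forall>v. (\<forall>k. k \<notin> D \<longrightarrow> v k = 0) \<longrightarrow>
        (\<exists>c. \<forall>k. v k = (\<Sum>i\<in>I. c i * b i k)))"

definition QLS :: "nat \<Rightarrow> (nat \<Rightarrow> nat \<Rightarrow> nat \<Rightarrow> complex) \<Rightarrow> bool" where
  "QLS n Psi \<longleftrightarrow>
     (\<forall>i\<in>{1..n}. onb {1..n} {1..n} (\<lambda>j. Psi i j)) \<and>
     (\<forall>j\<in>{1..n}. onb {1..n} {1..n} (\<lambda>i. Psi i j))"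

definition tensor :: "(nat \<Rightarrow> complex) \<Rightarrow> (nat \<Rightarrow> complex) \<Rightarrow> (nat \<times> nat \<Rightarrow> complex)" where
  "tensor u v = (\<lambda>(a, b). u a * v b)"

definition orthogonal_QLS :: "nat \<Rightarrow> (nat \<Rightarrow> nat \<Rightarrow> nat \<Rightarrow> complex) \<Rightarrow> (nat \<Rightarrow> nat \<Rightarrow> nat \<Rightarrow> complex) \<Rightarrow> bool" where
  "orthogonal_QLS n Psi Phi \<longleftrightarrow>
     onb ({1..n} \<times> {1..n}) ({1..n} \<times> {1..n}) (\<lambda>(i, j). tensor (Psi i j) (Phi i j))"

definition ket :: "nat \<Rightarrow> nat \<Rightarrow> complex" where
  "ket j = (\<lambda>k. if k = j then 1 else 0)"

definition supp :: "nat \<Rightarrow> (nat \<Rightarrow> complex) \<Rightarrow> nat set" where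
  "supp n v = {k\<in>{1..n}. v k \<noteq> 0}"

definition weight :: "nat \<Rightarrow> (nat \<Rightarrow> complex) \<Rightarrow> nat" where
  "weight n v = card (supp n v)"

definition standard_form :: "nat \<Rightarrow> (nat \<Rightarrow> nat \<Rightarrow> nat \<Rightarrow> complex) \<Rightarrow> (nat \<Rightarrow> nat \<Rightarrow> nat \<Rightarrow> complex) \<Rightarrow> bool" where
  "standard_form n Psi Phi \<longleftrightarrow> (\<forall>j\<in>{1..n}. Psi 1 j = ket j \<and> Phi 1 j = ket j)"

end

theory Submission imports Defs begin

lemma onb_supp: "onb I D b \<Longrightarrow> i \<in> I \<Longrightarrow> k \<notin> D \<Longrightarrow> b i k = 0"
  unfolding onb_def by blast

lemma onb_orth: "onb I D b \<Longrightarrow> i \<in> I \<Longrightarrow> i' \<in> I \<Longrightarrow>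
   (\<Sum>k\<in>D. cnj (b i k) * b i' k) = (if i = i' then 1 else 0)"
  unfolding onb_def by blast

lemma onb_pars:
  assumes o: "onb I D b" and fI: "finite I" and fD: "finite D" and x: "x \<in> D"
  shows "(\<Sum>i\<in>I. cnj (b i x) * b i y) = (if x = y then 1 else 0)"
proof -
  define v :: "'b \<Rightarrow> complex" where "v = (\<lambda>k. if k = x then 1 else 0)"
  have "\<forall>k. k \<notin> D \<longrightarrow> v k = 0" using x by (auto simp: v_def)
  then obtain c where c: "\<And>k. v k = (\<Sum>i\<in>I. c i * b i k)" using o unfolding onb_def by blast
  have ci: "c i' = cnj (b i' x)" if i': "i' \<in> I" for i'
  proof -
    have "(\<Sum>k\<in>D. cnj (b i' k) * v k) = cnj (b i' x)"
      using x fD by (simp add: v_def if_distrib cong: if_cong)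
    moreover have "(\<Sum>k\<in>D. cnj (b i' k) * v k) = (\<Sum>k\<in>D. \<Sum>i\<in>I. c i * (cnj (b i' k) * b i k))"
      by (simp add: c sum_distrib_left mult.commute mult.left_commute)
    moreover have "\<dots> = (\<Sum>i\<in>I. c i * (\<Sum>k\<in>D. cnj (b i' k) * b i k))"
      by (subst sum.swap) (simp add: sum_distrib_left)
    moreover have "\<dots> = (\<Sum>i\<in>I. c i * (if i' = i then 1 else 0))"
      using onb_orth[OF o i'] by simp
    moreover have "\<dots> = c i'" using fI i' by (simp add: if_distrib cong: if_cong)
    ultimately show ?thesis by simp
  qed
  have "v y = (\<Sum>i\<in>I. cnj (b i x) * b i y)" using c ci by simp
  then show ?thesis by (simp add: v_def eq_commute)
qed

lemma sum_single:
  assumes "finite A" "m \<in> A" "\<And>k. k \<in> A \<Longrightarrow> k \<noteq> m \<Longrightarrow> g k = 0"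
  shows "sum g A = g m"
proof -
  have "sum g A = g m + sum g (A - {m})" using assms by (simp add: sum.remove)
  also have "sum g (A - {m}) = 0" using assms by (intro sum.neutral) auto
  finally show ?thesis by simp
qed

lemma sum6:
  assumes "A = {s1,s2,s3,s4,s5,s6}" "distinct [s1,s2,s3,s4,s5,s6]"
  shows "sum f A = f s1 + f s2 + f s3 + f s4 + f s5 + f s6"
  using assms by (simp add: add.assoc)

lemma single:
  fixes xa xb xc ua ub uc :: complex
  assumes e1: "cnj xa * xc = - (cnj ua * uc)" and e2: "cnj xb * xc = - (cnj ub * uc)"
    and "uc \<noteq> 0" "ua \<noteq> 0"
  shows "\<exists>t::real. t \<ge> 0 \<and> cnj xa * xb = of_real t * (cnj ua * ub)"
proof -
  have xc: "xc \<noteq> 0" using e1 assms by auto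
  have e2': "xb * cnj xc = - (ub * cnj uc)" using arg_cong[OF e2, of cnj] by simp
  have a: "cnj xa = - (cnj ua * uc) / xc" using e1 xc by (simp add: field_simps)
  have b: "xb = - (ub * cnj uc) / cnj xc" using e2' xc by (simp add: field_simps)
  have "cnj xa * xb = (cnj ua * ub) * ((uc * cnj uc) / (xc * cnj xc))"
    unfolding a b by (simp add: field_simps)
  also have "(uc * cnj uc) / (xc * cnj xc) = of_real ((norm uc)^2 / (norm xc)^2)"
    by (simp add: complex_norm_square[symmetric])
  finally show ?thesis by (intro exI[of _ "(norm uc)^2 / (norm xc)^2"]) (simp add: mult.commute)
qed

lemma key_alg:
  fixes pa pb pc pd qa qb qc qd ua ub uc ud :: complex
  assumes nz: "ua \<noteq> 0" "ub \<noteq> 0" "uc \<noteq> 0" "ud \<noteq> 0"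
    and Eab: "cnj pa * pb + cnj qa * qb = - (cnj ua * ub)"
    and Eac: "cnj pa * pc + cnj qa * qc = - (cnj ua * uc)"
    and Ebc: "cnj pb * pc + cnj qb * qc = - (cnj ub * uc)"
    and Ead: "cnj pa * pd + cnj qa * qd = - (cnj ua * ud)"
    and Ebd: "cnj pb * pd + cnj qb * qd = - (cnj ub * ud)"
    and Xp: "pc \<noteq> 0 \<Longrightarrow> pd \<noteq> 0 \<Longrightarrow> pa = 0 \<and> pb = 0"
    and Xq: "qc \<noteq> 0 \<Longrightarrow> qd \<noteq> 0 \<Longrightarrow> qa = 0 \<and> qb = 0"
  shows False
proof -
  have fin: False if tp: "cnj pa * pb = of_real t1 * (cnj ua * ub)" "t1 \<ge> 0"
     and tq: "cnj qa * qb = of_real t2 * (cnj ua * ub)" "t2 \<ge> 0" for t1 t2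
  proof -
    have "of_real (t1 + t2 + 1) * (cnj ua * ub) = 0"
      using Eab tp tq by (simp add: algebra_simps)
    moreover have "t1 + t2 + 1 \<noteq> 0" using tp tq by simp
    ultimately have "complex_of_real (t1 + t2 + 1) = 0" using nz by (metis mult_eq_0_iff complex_cnj_zero_iff)
    then show False using \<open>t1 + t2 + 1 \<noteq> 0\<close> by (metis of_real_eq_0_iff)
  qed
  have z: "cnj x * y = of_real 0 * (cnj ua * ub)" if "x = 0" for x y :: complex using that by simp
  show False
  proof (cases "pa = 0 \<and> pb = 0")
    case True
    then obtain t where "t \<ge> 0" "cnj qa * qb = of_real t * (cnj ua * ub)"
      using single[of qa qc ua uc qb ub] Eac Ebc nz by auto
    then show False using fin[of 0 t] True by simp
  next
    case pF: False
    show False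
    proof (cases "qa = 0 \<and> qb = 0")
      case True
      then obtain t where "t \<ge> 0" "cnj pa * pb = of_real t * (cnj ua * ub)"
        using single[of pa pc ua uc pb ub] Eac Ebc nz by auto
      then show False using fin[of t 0] True by simp
    next
      case qF: False
      have p: "pc = 0 \<or> pd = 0" using Xp pF by blast
      have q: "qc = 0 \<or> qd = 0" using Xq qF by blast
      show False
      proof (cases "pc = 0")
        case pc: True
        show False
        proof (cases "qc = 0")
          case True then show False using Eac pc nz by simp
        next
          case False
          then have qd: "qd = 0" using q by simp
          obtain t1 where t1: "t1 \<ge> 0" "cnj pa * pb = of_real t1 * (cnj ua * ub)"
            using single[of pa pd ua ud pb ub] Ead Ebd nz qd by auto
          obtain t2 where t2: "t2 \<ge> 0" "cnj qa * qb = of_real t2 * (cnj ua * ub)"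
            using single[of qa qc ua uc qb ub] Eac Ebc nz pc by auto
          show False using fin t1 t2 by blast
        qed
      next
        case pcF: False
        then have pd: "pd = 0" using p by simp
        show False
        proof (cases "qd = 0")
          case True then show False using Ead pd nz by simp
        next
          case False
          then have qc: "qc = 0" using q by simp
          obtain t1 where t1: "t1 \<ge> 0" "cnj pa * pb = of_real t1 * (cnj ua * ub)"
            using single[of pa pc ua uc pb ub] Eac Ebc nz qc by auto
          obtain t2 where t2: "t2 \<ge> 0" "cnj qa * qb = of_real t2 * (cnj ua * ub)"
            using single[of qa qd ua ud qb ub] Ead Ebd nz pd by auto
          show False using fin t1 t2 by blast
        qed
      qed
    qed
  qed
qed

lemma tensor_disj:
  assumes o: "orthogonal_QLS 6 Psi Phi" and sf: "standard_form 6 Psi Phi"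
    and a: "a \<in> {1..6}" and r: "r \<in> {1..6}" "r \<noteq> 1" and l: "l \<in> {1..6}"
  shows "Psi r l a * Phi r l a = 0"
proof -
  let ?T = "(\<lambda>(i, j). tensor (Psi i j) (Phi i j))"
  have ob: "onb ({1..6::nat} \<times> {1..6::nat}) ({1..6} \<times> {1..6}) ?T"
    using o unfolding orthogonal_QLS_def by simp
  have "(\<Sum>k\<in>{1..6::nat} \<times> {1..6::nat}. cnj (?T (1, a) k) * ?T (r, l) k) = 0"
    using onb_orth[OF ob, of "(1,a)" "(r,l)"] a r l by auto
  moreover have "?T (1, a) = tensor (ket a) (ket a)" using sf a unfolding standard_form_def by simp
  ultimately have s: "(\<Sum>k\<in>{1..6::nat} \<times> {1..6::nat}. cnj (tensor (ket a) (ket a) k) * tensor (Psi r l) (Phi r l) k) = 0"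
    by simp
  have "(\<Sum>k\<in>{1..6::nat} \<times> {1..6::nat}. cnj (tensor (ket a) (ket a) k) * tensor (Psi r l) (Phi r l) k)
      = cnj (tensor (ket a) (ket a) (a,a)) * tensor (Psi r l) (Phi r l) (a,a)"
    by (rule sum_single) (use a in \<open>auto simp: tensor_def ket_def split: if_splits\<close>)
  with s show ?thesis by (simp add: tensor_def ket_def)
qed

theorem mainTheorem6:
  fixes Psi Phi :: "nat \<Rightarrow> nat \<Rightarrow> nat \<Rightarrow> complex"
  assumes "QLS 6 Psi" and "QLS 6 Phi"
    and "orthogonal_QLS 6 Psi Phi"
    and "standard_form 6 Psi Phi"
    and "i \<in> {1..6}" and "j \<in> {1..6}"
    and "weight 6 (Psi i j) = 4"
  shows "\<forall>k\<in>{1..6}. weight 6 (Phi k j) = 1"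
proof -
  define I6 :: "nat set" where "I6 = {1..6}"
  have fin: "finite I6" by (simp add: I6_def)
  define P where "P = (\<lambda>r. Psi r j)"
  define F where "F = (\<lambda>r. Phi r j)"
  define u where "u = P i"
  have i: "i \<in> I6" and j: "j \<in> I6" using assms by (auto simp: I6_def)
  have oP: "onb I6 I6 P" using assms(1) j unfolding QLS_def P_def I6_def by auto
  have oF: "onb I6 I6 F" using assms(2) j unfolding QLS_def F_def I6_def by auto
  have P1: "P 1 = ket j" and F1: "F 1 = ket j"
    using assms(4) j unfolding standard_form_def P_def F_def I6_def by auto
  have one: "(1::nat) \<in> I6" by (simp add: I6_def)
  have P1': "P (Suc 0) = ket j" and F1': "F (Suc 0) = ket j" using P1 F1 by simp_all
  have dis: "P r x * F r x = 0" if "r \<in> I6" "r \<noteq> 1" "x \<in> I6" for r x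
    using tensor_disj[OF assms(3,4), of x r j] that j unfolding P_def F_def I6_def by auto
  have Pj: "P r j = 0" if "r \<in> I6" "r \<noteq> 1" for r
  proof -
    have "(\<Sum>k\<in>I6. cnj (P 1 k) * P r k) = 0" using onb_orth[OF oP one that(1)] that by simp
    moreover have "(\<Sum>k\<in>I6. cnj (P 1 k) * P r k) = cnj (P 1 j) * P r j"
      by (rule sum_single) (use fin j in \<open>auto simp: P1 P1' ket_def\<close>)
    ultimately show ?thesis by (simp add: P1 P1' ket_def)
  qed
  have Fj: "F r j = 0" if "r \<in> I6" "r \<noteq> 1" for r
  proof -
    have "(\<Sum>k\<in>I6. cnj (F 1 k) * F r k) = 0" using onb_orth[OF oF one that(1)] that by simp
    moreover have "(\<Sum>k\<in>I6. cnj (F 1 k) * F r k) = cnj (F 1 j) * F r j"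
      by (rule sum_single) (use fin j in \<open>auto simp: F1 F1' ket_def\<close>)
    ultimately show ?thesis by (simp add: F1 F1' ket_def)
  qed
  have suppket: "supp 6 (ket j) = {j}" using j by (auto simp: supp_def ket_def I6_def)
  have wket: "weight 6 (ket j) = 1" by (simp add: weight_def suppket)
  have i1: "i \<noteq> 1"
  proof
    assume "i = 1"
    then have "weight 6 (Psi i j) = 1" using P1 wket by (simp add: P_def)
    then show False using assms(7) by simp
  qed
  have cu: "card (supp 6 u) = 4" using assms(7) by (simp add: weight_def u_def P_def)
  have su: "supp 6 u \<subseteq> I6 - {j}" using Pj[OF i i1] by (auto simp: supp_def u_def I6_def)
  have c5: "card (I6 - {j}) = 5" using j by (simp add: I6_def)
  have "card ((I6 - {j}) - supp 6 u) = 1"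
    using su cu c5 fin by (simp add: card_Diff_subset finite_subset)
  then obtain m where mdef: "(I6 - {j}) - supp 6 u = {m}" by (auto simp: card_1_singleton_iff)
  have mm: "m \<in> I6" "m \<noteq> j" "m \<notin> supp 6 u" using mdef by blast+
  have m: "m \<in> I6" "m \<noteq> j" "u m = 0" using mm by (simp_all add: supp_def I6_def)
  have unz: "u x \<noteq> 0" if "x \<in> I6" "x \<noteq> j" "x \<noteq> m" for x
  proof -
    have "x \<in> supp 6 u" using mdef that by blast
    then show ?thesis by (simp add: supp_def)
  qed
  have Fi: "F i x = 0" if "x \<in> I6" "x \<noteq> m" for x
  proof (cases "x = j")
    case True then show ?thesis using Fj[OF i i1] by simp
  next
    case False
    then have "u x \<noteq> 0" using unz that by simp
    then show ?thesis using dis[OF i i1 that(1)] by (simp add: u_def)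
  qed
  have norm1: "(\<Sum>k\<in>I6. cnj (F r k) * F r k) = 1" if "r \<in> I6" for r
    using onb_orth[OF oF that that] by simp
  have Fim: "F i m \<noteq> 0"
  proof
    assume h: "F i m = 0"
    have "(\<Sum>k\<in>I6. cnj (F i k) * F i k) = 0"
      by (rule sum.neutral) (use Fi h in auto)
    then show False using norm1[OF i] by simp
  qed
  have Frm: "F r m = 0" if "r \<in> I6" "r \<noteq> i" for r
  proof -
    have "(\<Sum>k\<in>I6. cnj (F i k) * F r k) = 0" using onb_orth[OF oF i that(1)] that by simp
    moreover have "(\<Sum>k\<in>I6. cnj (F i k) * F r k) = cnj (F i m) * F r m"
      by (rule sum_single) (use fin m Fi in auto)
    ultimately show ?thesis using Fim by simp
  qed
  have Fsupp: "F r k = 0" if "r \<in> I6" "k \<notin> I6" for r k using onb_supp[OF oF that] .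
  have Psupp: "P r k = 0" if "r \<in> I6" "k \<notin> I6" for r k using onb_supp[OF oP that] .
  have wFi: "weight 6 (F i) = 1"
  proof -
    have "supp 6 (F i) = {m}" using Fi Fim m by (auto simp: supp_def I6_def)
    then show ?thesis by (simp add: weight_def)
  qed
  have parsP: "(\<Sum>s\<in>I6. cnj (P s x) * P s y) = 0" if "x \<in> I6" "x \<noteq> y" for x y
    using onb_pars[OF oP fin fin that(1), of y] that by simp
  have parsF: "(\<Sum>s\<in>I6. cnj (F s x) * F s y) = 0" if "x \<in> I6" "x \<noteq> y" for x y
    using onb_pars[OF oF fin fin that(1), of y] that by simp
  have main: "weight 6 (F r) = 1" if r: "r \<in> I6" "r \<noteq> 1" "r \<noteq> i" for r
  proof -
    obtain a where a: "a \<in> I6" "F r a \<noteq> 0"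
    proof -
      have "\<exists>a\<in>I6. F r a \<noteq> 0"
      proof (rule ccontr)
        assume "\<not> ?thesis"
        then have "(\<Sum>k\<in>I6. cnj (F r k) * F r k) = 0" by (intro sum.neutral) auto
        then show False using norm1[OF r(1)] by simp
      qed
      then show ?thesis using that by blast
    qed
    have uniq: "b = a" if b: "b \<in> I6" "F r b \<noteq> 0" for b
    proof (rule ccontr)
      assume ab: "b \<noteq> a"
      have aj: "a \<noteq> j" "a \<noteq> m" using a Fj[OF r(1,2)] Frm[OF r(1,3)] by auto
      have bj: "b \<noteq> j" "b \<noteq> m" using b Fj[OF r(1,2)] Frm[OF r(1,3)] by auto
      obtain l where l: "l \<in> I6" "l \<noteq> 1" "l \<noteq> i" "l \<noteq> r" "F l a \<noteq> 0" "F l b \<noteq> 0"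
      proof -
        have "\<exists>l\<in>I6. l \<noteq> 1 \<and> l \<noteq> i \<and> l \<noteq> r \<and> F l a \<noteq> 0 \<and> F l b \<noteq> 0"
        proof (rule ccontr)
          assume nl: "\<not> ?thesis"
          have "(\<Sum>s\<in>I6. cnj (F s a) * F s b) = cnj (F r a) * F r b"
          proof (rule sum_single[OF fin r(1)])
            fix s assume s: "s \<in> I6" "s \<noteq> r"
            show "cnj (F s a) * F s b = 0"
            proof (cases "s = 1")
              case True then show ?thesis using aj by (simp add: F1 F1' ket_def)
            next
              case s1: False
              show ?thesis
              proof (cases "s = i")
                case True then show ?thesis using Fi a aj by simp
              next
                case False then show ?thesis using nl s s1 by auto
              qed
            qed
          qed
          then show False using parsF[OF a(1) ab[symmetric]] a b by simp
        qed
        then show ?thesis using that by blast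
      qed
      have Pra: "P r a = 0" "P r b = 0" "P l a = 0" "P l b = 0"
        using dis[OF r(1,2) a(1)] dis[OF r(1,2) b(1)] dis[OF l(1,2) a(1)] dis[OF l(1,2) b(1)]
          a b l by auto
      have sub4: "{j, m, a, b} \<subseteq> I6" using j m a b by auto
      have c4: "card {j, m, a, b} = 4" using aj bj m ab by auto
      have "card (I6 - {j, m, a, b}) = 2"
        using card_Diff_subset[OF _ sub4] c4 by (simp add: I6_def)
      then obtain c d where cd: "I6 - {j, m, a, b} = {c, d}" "c \<noteq> d" by (auto simp: card_2_iff)
      have "I6 = {j, m, a, b} \<union> {c, d}" using sub4 cd(1) by blast
      also have "\<dots> = {j, m, a, b, c, d}" by blast
      finally have I6cols: "I6 = {j, m, a, b, c, d}" .
      have cn: "c \<notin> {j, m, a, b}" "d \<notin> {j, m, a, b}" using cd(1) by blast+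
      have dcols: "distinct [j, m, a, b, c, d]" using cn cd(2) aj bj m(2) ab by auto
      have cdI: "c \<in> I6" "d \<in> I6" "c \<noteq> j" "c \<noteq> m" "d \<noteq> j" "d \<noteq> m"
        "c \<noteq> a" "c \<noteq> b" "d \<noteq> a" "d \<noteq> b" using cd(1) by blast+
      have sub4r: "{1, i, r, l} \<subseteq> I6" using one i r l by auto
      have c4r: "card {1, i, r, l} = 4" using i1 r l by auto
      have "card (I6 - {1, i, r, l}) = 2"
        using card_Diff_subset[OF _ sub4r] c4r by (simp add: I6_def)
      then obtain p q where pq: "I6 - {1, i, r, l} = {p, q}" "p \<noteq> q" by (auto simp: card_2_iff)
      have "I6 = {1, i, r, l} \<union> {p, q}" using sub4r pq(1) by blast
      also have "\<dots> = {1, i, r, l, p, q}" by blast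
      finally have I6rows: "I6 = {1, i, r, l, p, q}" .
      have pn: "p \<notin> {1, i, r, l}" "q \<notin> {1, i, r, l}" using pq(1) by blast+
      have drows: "distinct [1, i, r, l, p, q]" using pn pq(2) i1 r l by auto
      have pqI: "p \<in> I6" "q \<in> I6" "p \<noteq> 1" "q \<noteq> 1" "p \<noteq> i" "q \<noteq> i" "p \<noteq> r" "q \<noteq> r"
        using pq(1) by blast+
      have E: "cnj (P p x) * P p y + cnj (P q x) * P q y = - (cnj (u x) * u y)"
        if xy: "x \<in> {a, b}" "y \<in> I6" "y \<noteq> j" "x \<noteq> y" for x y
      proof -
        have xI: "x \<in> I6" "x \<noteq> j" using xy a b aj bj by auto
        have "(\<Sum>s\<in>I6. cnj (P s x) * P s y) = 0" using parsP[OF xI(1) xy(4)] .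
        moreover have "(\<Sum>s\<in>I6. cnj (P s x) * P s y) =
            cnj (P 1 x) * P 1 y + cnj (P i x) * P i y + cnj (P r x) * P r y + cnj (P l x) * P l y
            + cnj (P p x) * P p y + cnj (P q x) * P q y"
          by (rule sum6[OF I6rows drows])
        moreover have "P 1 x = 0" "P r x = 0" "P l x = 0" using xI xy Pra by (auto simp: P1 P1' ket_def)
        ultimately have "cnj (u x) * u y + (cnj (P p x) * P p y + cnj (P q x) * P q y) = 0"
          by (simp add: u_def add.assoc)
        then show ?thesis by (simp add: eq_neg_iff_add_eq_0 add.commute)
      qed
      have X: "P s a = 0 \<and> P s b = 0" if s: "s \<in> I6" "s \<noteq> 1" "s \<noteq> i" "s \<noteq> r"
        "P s c \<noteq> 0" "P s d \<noteq> 0" for s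
      proof -
        have z: "F s c = 0" "F s d = 0" "F s j = 0" "F s m = 0"
          using dis[OF s(1,2) cdI(1)] dis[OF s(1,2) cdI(2)] s Fj[OF s(1,2)] Frm[OF s(1,3)] by auto
        have "(\<Sum>k\<in>I6. cnj (F s k) * F r k) = 0" using onb_orth[OF oF s(1) r(1)] s by simp
        moreover have "(\<Sum>k\<in>I6. cnj (F s k) * F r k) = cnj (F s j) * F r j + cnj (F s m) * F r m
            + cnj (F s a) * F r a + cnj (F s b) * F r b + cnj (F s c) * F r c + cnj (F s d) * F r d"
          by (rule sum6[OF I6cols dcols])
        ultimately have o1: "cnj (F s a) * F r a + cnj (F s b) * F r b = 0" using z by simp
        have "(\<Sum>k\<in>I6. cnj (F s k) * F s k) = cnj (F s j) * F s j + cnj (F s m) * F s m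
            + cnj (F s a) * F s a + cnj (F s b) * F s b + cnj (F s c) * F s c + cnj (F s d) * F s d"
          by (rule sum6[OF I6cols dcols])
        then have n1: "cnj (F s a) * F s a + cnj (F s b) * F s b = 1" using z norm1[OF s(1)] by simp
        have fa: "F s a \<noteq> 0"
        proof
          assume h: "F s a = 0"
          then have "F s b \<noteq> 0" using n1 by auto
          then show False using o1 h b by simp
        qed
        have fb: "F s b \<noteq> 0"
        proof
          assume h: "F s b = 0"
          then show False using o1 h a fa by simp
        qed
        show ?thesis using dis[OF s(1,2) a(1)] dis[OF s(1,2) b(1)] fa fb by simp
      qed
      show False
      proof (rule key_alg[of "u a" "u b" "u c" "u d" "P p a" "P p b" "P q a" "P q b"
            "P p c" "P q c" "P p d" "P q d"])
        show "u a \<noteq> 0" "u b \<noteq> 0" "u c \<noteq> 0" "u d \<noteq> 0"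
          using unz a b aj bj cdI by auto
        show "cnj (P p a) * P p b + cnj (P q a) * P q b = - (cnj (u a) * u b)"
          using E[of a b] b bj ab by auto
        show "cnj (P p a) * P p c + cnj (P q a) * P q c = - (cnj (u a) * u c)"
          using E[of a c] cdI by auto
        show "cnj (P p b) * P p c + cnj (P q b) * P q c = - (cnj (u b) * u c)"
          using E[of b c] cdI by auto
        show "cnj (P p a) * P p d + cnj (P q a) * P q d = - (cnj (u a) * u d)"
          using E[of a d] cdI by auto
        show "cnj (P p b) * P p d + cnj (P q b) * P q d = - (cnj (u b) * u d)"
          using E[of b d] cdI by auto
        show "P p a = 0 \<and> P p b = 0" if "P p c \<noteq> 0" "P p d \<noteq> 0"
          using X[of p] pqI that by auto
        show "P q a = 0 \<and> P q b = 0" if "P q c \<noteq> 0" "P q d \<noteq> 0"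
          using X[of q] pqI that by auto
      qed
    qed
    have "supp 6 (F r) = {a}"
    proof (intro equalityI subsetI)
      fix x assume "x \<in> supp 6 (F r)"
      then have "x \<in> I6" "F r x \<noteq> 0" by (simp_all add: supp_def I6_def)
      then show "x \<in> {a}" using uniq by simp
    next
      fix x assume "x \<in> {a}"
      then show "x \<in> supp 6 (F r)" using a by (simp add: supp_def I6_def)
    qed
    then show ?thesis by (simp add: weight_def)
  qed
  show ?thesis
  proof
    fix k assume k: "k \<in> {1..6::nat}"
    then have kI: "k \<in> I6" by (simp add: I6_def)
    show "weight 6 (Phi k j) = 1"
    proof (cases "k = 1")
      case True
      have "Phi k j = ket j" using F1 True unfolding F_def by simp
      then show ?thesis using wket by simp
    next
      case k1: False
      show ?thesis
      proof (cases "k = i")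
        case True then show ?thesis using wFi unfolding F_def by simp
      next
        case False then show ?thesis using main[OF kI k1 False] unfolding F_def by simp
      qed
    qed
  qed
qed

end
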